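(* Conditional independence is not preserved under setwise (hence also weak) convergence: there exist standard Borel spaces $\mathbb{U}^1,\mathbb{Y},\mathbb{U}^2$ (e.g. $\mathbb{Y}=[0,1]$, $\mathbb{U}^1=\mathbb{U}^2=\{0,1\}$), a sequence of probability measures $P_n\in\mathcal{P}(\mathbb{U}^1\times\mathbb{Y}\times\mathbb{U}^2)$ with $P_n(du^1|y,u^2)=P_n(du^1|y)$ for all $n$, and a probability measure $P$ such that $P_n\to P$ setwise but $P(du^1|y,u^2)\neq P(du^1|y)$ (i.e., under $P$, $u^1$ and $u^2$ are not conditionally independent given $y$).
   Context: $P_n\to P$ setwise means $\int f\,dP_n\to\int f\,dP$ for all bounded measurable $f$; weakly means the same for all bounded continuous $f$. *)

theory Defs
  imports "HOL-Probability.Probability"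
begin

definition setwise_conv :: "'a measure \<Rightarrow> (nat \<Rightarrow> 'a measure) \<Rightarrow> 'a measure \<Rightarrow> bool" where
  "setwise_conv M Pn P \<longleftrightarrow>
     (\<forall>f :: 'a \<Rightarrow> real. f \<in> borel_measurable M \<longrightarrow> bounded (range f) \<longrightarrow>
        (\<lambda>n. integral\<^sup>L (Pn n) f) \<longlonglongrightarrow> integral\<^sup>L P f)"

text \<open>Under P on U1 x Y x U2: P(du1 | y,u2) = P(du1 | y), i.e. for every measurable A
  the conditional probability of (u1 in A) given (y,u2) agrees a.e. with that given y.\<close>
definition cond_indep_given ::
  "('u1 \<times> 'y \<times> 'u2) measure \<Rightarrow> 'u1 measure \<Rightarrow> 'y measure \<Rightarrow> 'u2 measure \<Rightarrow> bool" where
  "cond_indep_given P U1 Y U2 \<longleftrightarrow>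
     (\<forall>A \<in> sets U1. AE x in P.
        real_cond_exp P (vimage_algebra (space P) (\<lambda>x. (fst (snd x), snd (snd x))) (Y \<Otimes>\<^sub>M U2))
          (\<lambda>x. indicator A (fst x)) x
      = real_cond_exp P (vimage_algebra (space P) (\<lambda>x. fst (snd x)) Y)
          (\<lambda>x. indicator A (fst x)) x)"

end

theory Submission
  imports Defs
begin
definition Od :: "nat \<Rightarrow> real set" where "Od n = {y. odd \<lfloor>2^n*y\<rfloor>}"
lemma Od_borel[measurable]: "Od n \<in> sets borel"
  unfolding Od_def by measurable

lemma lb_transl:
  fixes B :: "real set" assumes "B \<in> sets borel"
  shows "measure lborel {y. c + y \<in> B} = measure lborel B"
proof -
  have "measure (distr lborel borel ((+) c)) B = measure lborel B"
    by (simp add: lborel_distr_plus)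
  also have "measure (distr lborel borel ((+) c)) B = measure lborel ((+) c -` B \<inter> space lborel)"
    using assms by (intro measure_distr) auto
  finally show ?thesis by (simp add: vimage_def)
qed

lemma fin_lb: "(S::real set) \<in> sets borel \<Longrightarrow> S \<subseteq> {a..b} \<Longrightarrow> emeasure lborel S \<noteq> \<infinity>"
proof -
  assume "S \<in> sets borel" "S \<subseteq> {a..b}"
  then have "emeasure lborel S \<le> emeasure lborel {a..b}" by (intro emeasure_mono) auto
  also have "\<dots> < \<infinity>" by (simp add: emeasure_lborel_Icc_eq)
  finally show ?thesis by simp
qed

lemma fmeas_lb: "(S::real set) \<in> sets borel \<Longrightarrow> S \<subseteq> {a..b} \<Longrightarrow> S \<in> fmeasurable lborel"
  using fin_lb[of S a b] by (simp add: fmeasurable_def less_top)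

lemma half_bound:
  assumes a: "0 \<le> a"
  shows "\<bar>measure lborel ({0..a} \<inter> Od n) - a/2\<bar> \<le> 1/2^n"
proof -
  define d :: real where "d = 1/2^n"
  have d: "d > 0" by (simp add: d_def)
  define A where "A = {0..a} \<inter> Od n"
  define B where "B = {0..a} - Od n"
  have [measurable]: "A \<in> sets borel" "B \<in> sets borel" unfolding A_def B_def by auto
  have sum: "measure lborel A + measure lborel B = a"
  proof -
    have "measure lborel (A \<union> B) = measure lborel A + measure lborel B"
      by (intro measure_Union fin_lb[of _ 0 a]) (auto simp: A_def B_def)
    moreover have "A \<union> B = {0..a}" by (auto simp: A_def B_def)
    ultimately show ?thesis using a by simp
  qed
  have shift: "odd \<lfloor>2^n*(y - d)\<rfloor> \<longleftrightarrow> \<not> odd \<lfloor>2^n*y\<rfloor>" for y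
  proof -
    have "2^n*(y - d) = 2^n*y - 1" by (simp add: d_def right_diff_distrib)
    then show ?thesis by simp
  qed
  have key: "measure lborel X \<le> measure lborel Z + d"
    if X: "X = {0..a} \<inter> {y. P y}" and Z: "Z = {0..a} \<inter> {y. \<not> P y}"
      and P: "\<And>y. P (y - d) \<longleftrightarrow> \<not> P y" and [measurable]: "X \<in> sets borel" and Zm[measurable]: "Z \<in> sets borel"
    for X Z P
  proof -
    have "measure lborel X = measure lborel {y. (-d) + y \<in> X}"
      by (rule lb_transl[symmetric]) simp
    also have "{y. (-d) + y \<in> X} \<subseteq> Z \<union> {a..a+d}"
    proof
      fix y assume "y \<in> {y. (-d) + y \<in> X}"
      then have y: "0 \<le> y - d" "y - d \<le> a" "P (y - d)" by (auto simp: X)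
      then have "\<not> P y" using P by blast
      then show "y \<in> Z \<union> {a..a+d}" using y d by (auto simp: Z)
    qed
    then have "measure lborel {y. (-d) + y \<in> X} \<le> measure lborel (Z \<union> {a..a+d})"
      by (intro measure_mono_fmeasurable fmeas_lb[of _ 0 "a+d"]) (use d a Zm in \<open>auto simp del: Z\<close>, auto simp: Z)
    also have "\<dots> \<le> measure lborel Z + measure lborel {a..a+d}"
      by (intro measure_subadditive fin_lb[of _ 0 "a+d"]) (use d a Zm in \<open>auto simp: Z\<close>)
    finally show ?thesis using d by simp
  qed
  have k1: "measure lborel A \<le> measure lborel B + d"
    by (rule key[where P="\<lambda>y. odd \<lfloor>2^n*y\<rfloor>"])
       (simp_all add: A_def B_def Od_def shift set_diff_eq Int_def)
  have k2: "measure lborel B \<le> measure lborel A + d"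
    by (rule key[where P="\<lambda>y. \<not> odd \<lfloor>2^n*y\<rfloor>"])
       (simp_all add: A_def B_def Od_def shift set_diff_eq Int_def)
  show ?thesis using k1 k2 sum unfolding A_def[symmetric] d_def[symmetric] by linarith
qed
definition Sn :: "nat \<Rightarrow> real set" where "Sn n = {0..1} \<inter> Od n"
lemma Sn_borel[measurable]: "Sn n \<in> sets borel" unfolding Sn_def by measurable

lemma basic_conv: "(\<lambda>n. measure lborel ({..a} \<inter> Sn n)) \<longlonglongrightarrow> measure lborel ({..a} \<inter> {0..1}) / 2"
proof -
  define c where "c = max 0 (min a 1)"
  have c: "0 \<le> c" by (simp add: c_def)
  have e1: "{..a} \<inter> Sn n = {0..c} \<inter> Od n" for n
  proof -
    have h: "0 < x \<Longrightarrow> x \<le> c \<longleftrightarrow> x \<le> a \<and> x \<le> 1" for x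
      unfolding c_def by linarith
    have z: "odd \<lfloor>2^n*x\<rfloor> \<Longrightarrow> x \<noteq> 0" for x :: real by auto
    show ?thesis unfolding Sn_def Od_def using h z by (auto simp: less_le)
  qed
  have e2: "measure lborel ({..a} \<inter> {0..1}) = c"
  proof (cases "a < 0")
    case True then have "{..a} \<inter> {0..1::real} = {}" by auto
    then show ?thesis using True by (simp add: c_def)
  next
    case False then have "{..a} \<inter> {0..1::real} = {0..c}" by (auto simp: c_def)
    then show ?thesis using c by simp
  qed
  have "(\<lambda>n. measure lborel ({0..c} \<inter> Od n) - c/2) \<longlonglongrightarrow> 0"
  proof (rule Lim_null_comparison)
    show "\<forall>\<^sub>F n in sequentially. norm (measure lborel ({0..c} \<inter> Od n) - c/2) \<le> (1/2)^n"
      using half_bound[OF c] by (simp add: power_one_over)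
    show "(\<lambda>n. (1/2::real)^n) \<longlonglongrightarrow> 0" by (rule LIMSEQ_power_zero) simp
  qed
  from tendsto_add[OF this tendsto_const[of "c/2"]]
  show ?thesis unfolding e1 e2 by (simp only: diff_add_cancel add_0_left)
qed

lemma fin_Sn: "emeasure lborel (X \<inter> Sn n) \<noteq> \<infinity>" if "X \<in> sets borel" for X
  using that by (intro fin_lb[of _ 0 1]) (auto simp: Sn_def)

lemma rademacher_sets:
  assumes B: "B \<in> sets borel"
  shows "(\<lambda>n. measure lborel (B \<inter> Sn n)) \<longlonglongrightarrow> measure lborel (B \<inter> {0..1}) / 2"
proof -
  have eqb: "sets (borel::real measure) = sigma_sets UNIV (range atMost)"
    by (subst borel_eq_atMost) (simp add: sets_measure_of)
  have B': "B \<in> sigma_sets UNIV (range atMost)"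
    using B eqb by simp
  have IS: "Int_stable (range (atMost::real \<Rightarrow> real set))"
    by (auto simp: Int_stable_def Int_atMost)
  have cl: "range (atMost::real \<Rightarrow> real set) \<subseteq> Pow UNIV" by simp
  from IS cl B' show ?thesis
  proof (induction rule: sigma_sets_induct_disjoint)
    case (basic A) then show ?case using basic_conv by auto
  next
    case empty then show ?case by simp
  next
    case (compl A)
    have Ab: "A \<in> sets borel" using compl(1) eqb by simp
    have S: "(\<lambda>n. measure lborel (Sn n)) \<longlonglongrightarrow> 1/2"
      using basic_conv[of 1] by (simp add: Sn_def Int_absorb1 Int_assoc[symmetric])
    have d1: "measure lborel ((UNIV - A) \<inter> Sn n) = measure lborel (Sn n) - measure lborel (A \<inter> Sn n)" for n
    proof -
      have "(UNIV - A) \<inter> Sn n = Sn n - (A \<inter> Sn n)" by auto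
      moreover have "measure lborel (Sn n - (A \<inter> Sn n)) = measure lborel (Sn n) - measure lborel (A \<inter> Sn n)"
        using Ab fin_Sn[of UNIV n] by (intro measure_Diff) auto
      ultimately show ?thesis by simp
    qed
    have d2: "measure lborel ((UNIV - A) \<inter> {0..1}) = 1 - measure lborel (A \<inter> {0..1})"
    proof -
      have "(UNIV - A) \<inter> {0..1} = {0..1} - (A \<inter> {0..1::real})" by auto
      moreover have "measure lborel ({0..1} - (A \<inter> {0..1::real})) = measure lborel {0..1::real} - measure lborel (A \<inter> {0..1})"
        using Ab by (intro measure_Diff) auto
      ultimately show ?thesis by simp
    qed
    show ?case unfolding d1 d2 using tendsto_diff[OF S compl(2)] by (simp add: field_simps)
  next
    case (union A)
    have Ab: "A i \<in> sets borel" for i using union(2) eqb by auto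
    have sums1: "(\<lambda>i. measure lborel (A i \<inter> Sn n)) sums measure lborel ((\<Union>i. A i) \<inter> Sn n)" for n
    proof -
      have "(\<lambda>i. measure lborel (A i \<inter> Sn n)) sums measure lborel (\<Union>i. A i \<inter> Sn n)"
        using Ab union(1) by (intro measure_UNION fin_lb[of _ 0 1]) (auto simp: Sn_def disjoint_family_on_def)
      then show ?thesis by simp
    qed
    have sums2: "(\<lambda>i. measure lborel (A i \<inter> {0..1})) sums measure lborel ((\<Union>i. A i) \<inter> {0..1})"
    proof -
      have "(\<lambda>i. measure lborel (A i \<inter> {0..1})) sums measure lborel (\<Union>i. A i \<inter> {0..1})"
        using Ab union(1) by (intro measure_UNION fin_lb[of _ 0 1]) (auto simp: disjoint_family_on_def)
      then show ?thesis by simp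
    qed
    have T: "(\<lambda>n. suminf (\<lambda>k. measure lborel (A k \<inter> Sn n))) \<longlonglongrightarrow> suminf (\<lambda>k. measure lborel (A k \<inter> {0..1}) / 2)"
    proof (rule tannerys_theorem[THEN conjunct2, THEN conjunct2])
      show "\<And>k. (\<lambda>n. measure lborel (A k \<inter> Sn n)) \<longlonglongrightarrow> measure lborel (A k \<inter> {0..1}) / 2"
        by (rule union(3))
      show "\<forall>\<^sub>F (k, n) in sequentially \<times>\<^sub>F sequentially. norm (measure lborel (A k \<inter> Sn n)) \<le> measure lborel (A k \<inter> {0..1})"
      proof (intro always_eventually allI, clarify)
        fix k n
        show "norm (measure lborel (A k \<inter> Sn n)) \<le> measure lborel (A k \<inter> {0..1})"
          using Ab by (auto intro!: measure_mono_fmeasurable fmeas_lb[of _ 0 1] simp: Sn_def)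
      qed
      show "summable (\<lambda>k. measure lborel (A k \<inter> {0..1}))" using sums2 by (rule sums_summable)
    qed simp
    show ?case using T sums1 sums2 by (simp add: sums_iff suminf_divide)
  qed
qed
lemma approx_int:
  assumes Q: "prob_space Q" and sQ: "sets Q = sets M" and f[measurable]: "f \<in> borel_measurable M"
    and K: "\<And>x. \<bar>f x\<bar> \<le> K" and e: "0 < e"
  defines "I \<equiv> {-\<lceil>K/e\<rceil>-1..\<lceil>K/e\<rceil>+1}"
  shows "\<bar>integral\<^sup>L Q f - (\<Sum>k\<in>I. e * real_of_int k * measure Q {x\<in>space M. \<lfloor>f x / e\<rfloor> = k})\<bar> \<le> e"
proof -
  interpret prob_space Q by fact
  have sp: "space Q = space M" using sQ by (rule sets_eq_imp_space_eq)
  have fQ[measurable]: "f \<in> borel_measurable Q" unfolding measurable_cong_sets[OF sQ refl] by (rule f)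
  define s where "s x = (\<Sum>k\<in>I. e * real_of_int k * indicator {x\<in>space M. \<lfloor>f x / e\<rfloor> = k} x)" for x
  have Em[measurable]: "{x\<in>space M. \<lfloor>f x / e\<rfloor> = k} \<in> sets Q" for k
    unfolding sQ by measurable
  have sm[measurable]: "s \<in> borel_measurable Q" unfolding s_def by measurable
  have inI: "\<lfloor>f x / e\<rfloor> \<in> I" for x
  proof -
    have k: "-K \<le> f x" "f x \<le> K" using K[of x] by (simp_all add: abs_le_iff)
    have t: "- (K/e) \<le> f x / e" "f x / e \<le> K/e"
      using divide_right_mono[OF k(1), of e] divide_right_mono[OF k(2), of e] e by simp_all
    have a: "real_of_int \<lfloor>f x / e\<rfloor> \<le> f x / e" "f x / e < real_of_int \<lfloor>f x / e\<rfloor> + 1"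
       "K/e \<le> real_of_int \<lceil>K/e\<rceil>" by linarith+
    have u1: "real_of_int \<lfloor>f x / e\<rfloor> \<le> real_of_int \<lceil>K/e\<rceil> + 1" using t a by linarith
    have u2: "- real_of_int \<lceil>K/e\<rceil> - 1 \<le> real_of_int \<lfloor>f x / e\<rfloor>" using t a by linarith
    have "\<lfloor>f x / e\<rfloor> \<le> \<lceil>K/e\<rceil> + 1" using u1 by linarith
    moreover have "- \<lceil>K/e\<rceil> - 1 \<le> \<lfloor>f x / e\<rfloor>" using u2 by linarith
    ultimately show ?thesis unfolding I_def by simp
  qed
  have sx: "s x = e * real_of_int \<lfloor>f x / e\<rfloor>" if "x \<in> space M" for x
  proof -
    have "s x = (\<Sum>k\<in>I. if k = \<lfloor>f x / e\<rfloor> then e * real_of_int k else 0)"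
      unfolding s_def using that by (intro sum.cong) (auto simp: indicator_def)
    also have "\<dots> = e * real_of_int \<lfloor>f x / e\<rfloor>" using inI[of x] by (simp add: sum.delta' I_def)
    finally show ?thesis .
  qed
  have close: "\<bar>f x - s x\<bar> \<le> e" if "x \<in> space M" for x
  proof -
    have "real_of_int \<lfloor>f x / e\<rfloor> \<le> f x / e" "f x / e < real_of_int \<lfloor>f x / e\<rfloor> + 1"
      by linarith+
    then have "e * real_of_int \<lfloor>f x / e\<rfloor> \<le> e * (f x / e)" "e * (f x / e) < e * (real_of_int \<lfloor>f x / e\<rfloor> + 1)"
      using e by (intro mult_left_mono mult_strict_left_mono; simp)+
    then have "e * real_of_int \<lfloor>f x / e\<rfloor> \<le> f x" "f x < e * real_of_int \<lfloor>f x / e\<rfloor> + e"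
      using e by (simp_all add: distrib_left)
    then show ?thesis using sx[OF that] by auto
  qed
  have intf: "integrable Q f"
    by (rule integrable_const_bound[where B=K]) (auto simp: K)
  have ints: "integrable Q s"
  proof (rule integrable_const_bound[where B="K+e"])
    show "AE x in Q. norm (s x) \<le> K + e"
    proof (rule AE_I2)
      fix x assume "x \<in> space Q"
      then have "\<bar>f x - s x\<bar> \<le> e" using close sp by simp
      then show "norm (s x) \<le> K + e" using K[of x] by simp
    qed
  qed simp
  have "integral\<^sup>L Q s = (\<Sum>k\<in>I. e * real_of_int k * measure Q {x\<in>space M. \<lfloor>f x / e\<rfloor> = k})"
  proof -
    have ii: "integrable Q (\<lambda>x. e * real_of_int k * indicator {x\<in>space M. \<lfloor>f x / e\<rfloor> = k} x)" for k
      using Em[of k] by (intro integrable_mult_right integrable_real_indicator) (auto simp: less_top[symmetric])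
    have "integral\<^sup>L Q s = (\<Sum>k\<in>I. integral\<^sup>L Q (\<lambda>x. e * real_of_int k * indicator {x\<in>space M. \<lfloor>f x / e\<rfloor> = k} x))"
      unfolding s_def using Bochner_Integration.integral_sum[where I=I and M=Q and f="\<lambda>k x. e * real_of_int k * indicator {x\<in>space M. \<lfloor>f x / e\<rfloor> = k} x", OF ii] by simp
    also have "\<dots> = (\<Sum>k\<in>I. e * real_of_int k * measure Q {x\<in>space M. \<lfloor>f x / e\<rfloor> = k})"
      by (intro sum.cong refl) (simp add: sp Int_absorb2)
    finally show ?thesis .
  qed
  moreover have "\<bar>integral\<^sup>L Q f - integral\<^sup>L Q s\<bar> \<le> e"
  proof -
    have "\<bar>integral\<^sup>L Q f - integral\<^sup>L Q s\<bar> = \<bar>integral\<^sup>L Q (\<lambda>x. f x - s x)\<bar>"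
      using intf ints by simp
    also have "\<dots> \<le> integral\<^sup>L Q (\<lambda>x. \<bar>f x - s x\<bar>)" by (rule integral_abs_bound)
    also have "\<dots> \<le> integral\<^sup>L Q (\<lambda>x. e)"
      using close intf ints by (intro integral_mono) (auto simp: sp)
    finally show ?thesis by (simp add: prob_space)
  qed
  ultimately show ?thesis by simp
qed
lemma setwise_from_sets:
  assumes Pn: "\<And>n. prob_space (Pn n)" "\<And>n. sets (Pn n) = sets M"
    and P: "prob_space P" "sets P = sets M"
    and conv: "\<And>C. C \<in> sets M \<Longrightarrow> (\<lambda>n. measure (Pn n) C) \<longlonglongrightarrow> measure P C"
  shows "setwise_conv M Pn P"
  unfolding setwise_conv_def
proof (intro allI impI)
  fix f :: "_ \<Rightarrow> real" assume f[measurable]: "f \<in> borel_measurable M" and b: "bounded (range f)"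
  obtain K where K: "\<And>x. \<bar>f x\<bar> \<le> K" using b unfolding bounded_real by auto
  show "(\<lambda>n. integral\<^sup>L (Pn n) f) \<longlonglongrightarrow> integral\<^sup>L P f"
  proof (rule LIMSEQ_I)
    fix r :: real assume r: "0 < r"
    define e where "e = r / 4"
    have e: "0 < e" using r by (simp add: e_def)
    define I where "I = {-\<lceil>K/e\<rceil>-1..\<lceil>K/e\<rceil>+1}"
    define Sm where "Sm Q = (\<Sum>k\<in>I. e * real_of_int k * measure Q {x\<in>space M. \<lfloor>f x / e\<rfloor> = k})" for Q
    have "(\<lambda>n. Sm (Pn n)) \<longlonglongrightarrow> Sm P"
      unfolding Sm_def by (intro tendsto_intros conv) measurable
    from LIMSEQ_D[OF this e] obtain N where N: "\<And>n. n \<ge> N \<Longrightarrow> norm (Sm (Pn n) - Sm P) < e" by auto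
    have a1: "\<bar>integral\<^sup>L (Pn n) f - Sm (Pn n)\<bar> \<le> e" for n
      unfolding Sm_def I_def by (rule approx_int[OF Pn(1) Pn(2) f K e])
    have a2: "\<bar>integral\<^sup>L P f - Sm P\<bar> \<le> e"
      unfolding Sm_def I_def by (rule approx_int[OF P(1) P(2) f K e])
    show "\<exists>no. \<forall>n\<ge>no. norm (integral\<^sup>L (Pn n) f - integral\<^sup>L P f) < r"
    proof (intro exI allI impI)
      fix n assume "N \<le> n"
      from N[OF this] a1[of n] a2 show "norm (integral\<^sup>L (Pn n) f - integral\<^sup>L P f) < r"
        unfolding e_def real_norm_def abs_le_iff abs_less_iff using r by linarith
    qed
  qed
qed

abbreviation "YY \<equiv> restrict_space borel {0..1::real}"
abbreviation "MM \<equiv> count_space UNIV \<Otimes>\<^sub>M (YY \<Otimes>\<^sub>M count_space UNIV) :: (bool \<times> real \<times> bool) measure"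
abbreviation "LL \<equiv> restrict_space lborel {0..1::real}"

definition gg :: "nat \<Rightarrow> real \<Rightarrow> bool" where "gg n y = odd \<lfloor>2^n*y\<rfloor>"
definition PPn :: "nat \<Rightarrow> (bool \<times> real \<times> bool) measure" where
  "PPn n = distr LL MM (\<lambda>y. (gg n y, y, gg n y))"
definition PP :: "(bool \<times> real \<times> bool) measure" where
  "PP = distr (measure_pmf (bernoulli_pmf (1/2)) \<Otimes>\<^sub>M LL) MM (\<lambda>(c,y). (c, y, c))"

lemma sets_LL: "sets LL = sets YY" by (simp add: sets_restrict_space)
lemma prob_LL: "prob_space LL"
  by (rule prob_spaceI) (simp add: emeasure_restrict_space)

lemma gg_meas[measurable]: "gg n \<in> borel \<rightarrow>\<^sub>M count_space UNIV"
  unfolding gg_def by measurable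

lemma gg_measY[measurable]: "gg n \<in> YY \<rightarrow>\<^sub>M count_space UNIV"
  by (rule measurable_restrict_space1) measurable
lemma id_measY[measurable]: "(\<lambda>x. x) \<in> borel_measurable YY"
  by (rule measurable_restrict_space1) simp

lemma Tn_meas: "(\<lambda>y. (gg n y, y, gg n y)) \<in> LL \<rightarrow>\<^sub>M MM"
proof -
  have "(\<lambda>y. (gg n y, y, gg n y)) \<in> YY \<rightarrow>\<^sub>M MM"
    by measurable
  then show ?thesis using measurable_cong_sets[OF sets_LL refl] by simp
qed

lemma T_meas: "(\<lambda>(c,y). (c, y, c)) \<in> measure_pmf (bernoulli_pmf (1/2)) \<Otimes>\<^sub>M LL \<rightarrow>\<^sub>M MM"
proof -
  have "(\<lambda>(c,y). (c, y, c)) \<in> count_space UNIV \<Otimes>\<^sub>M YY \<rightarrow>\<^sub>M MM"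
    by measurable
  moreover have "sets (measure_pmf (bernoulli_pmf (1/2)) \<Otimes>\<^sub>M LL) = sets (count_space UNIV \<Otimes>\<^sub>M YY)"
    by (intro sets_pair_measure_cong) (simp_all add: sets_LL)
  ultimately show ?thesis using measurable_cong_sets[OF _ refl] by blast
qed

lemma prob_PPn: "prob_space (PPn n)"
  unfolding PPn_def by (intro prob_space.prob_space_distr prob_LL Tn_meas)
lemma sets_PPn: "sets (PPn n) = sets MM" unfolding PPn_def by simp
lemma prob_PP: "prob_space PP"
  unfolding PP_def
  by (intro prob_space.prob_space_distr T_meas prob_space_pair prob_LL prob_space_measure_pmf)
lemma sets_PP: "sets PP = sets MM" unfolding PP_def by simp

definition sect :: "bool \<Rightarrow> (bool \<times> real \<times> bool) set \<Rightarrow> real set" where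
  "sect b C = {y \<in> {0..1}. (b, y, b) \<in> C}"

lemma sect_borel[measurable]: assumes "C \<in> sets MM" shows "sect b C \<in> sets borel"
proof -
  have m: "(\<lambda>y. (b, y, b)) \<in> YY \<rightarrow>\<^sub>M MM" by measurable
  have "(\<lambda>y. (b, y, b)) -` C \<inter> space YY \<in> sets YY" by (rule measurable_sets[OF m assms])
  moreover have "(\<lambda>y. (b, y, b)) -` C \<inter> space YY = sect b C" by (auto simp: sect_def)
  ultimately have "sect b C \<in> sets YY" by simp
  then show ?thesis by (subst (asm) sets_restrict_space_iff) auto
qed

lemma sect_sub: "sect b C \<subseteq> {0..1}" by (auto simp: sect_def)

lemma measure_PPn:
  assumes C: "C \<in> sets MM"
  shows "measure (PPn n) C = measure lborel (sect True C \<inter> Sn n)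
     + (measure lborel (sect False C) - measure lborel (sect False C \<inter> Sn n))"
proof -
  have "measure (PPn n) C = measure LL ((\<lambda>y. (gg n y, y, gg n y)) -` C \<inter> space LL)"
    unfolding PPn_def by (rule measure_distr[OF Tn_meas C])
  also have "(\<lambda>y. (gg n y, y, gg n y)) -` C \<inter> space LL = (sect True C \<inter> Sn n) \<union> (sect False C - Sn n)"
    apply (auto simp: sect_def Sn_def Od_def gg_def)
    subgoal for y by (cases "odd \<lfloor>2^n*y\<rfloor>") auto
    done
  also have "measure LL \<dots> = measure lborel ((sect True C \<inter> Sn n) \<union> (sect False C - Sn n))"
    by (rule measure_restrict_space) (auto simp: sect_def)
  also have "\<dots> = measure lborel (sect True C \<inter> Sn n) + measure lborel (sect False C - Sn n)"
    using sect_sub[of True C] sect_sub[of False C] sect_borel[OF C, of True] sect_borel[OF C, of False]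
    by (intro measure_Union fin_lb[of _ 0 1] sets.Int sets.Diff sect_borel[OF C] Sn_borel) (auto simp: Sn_def)
  also have "measure lborel (sect False C - Sn n) = measure lborel (sect False C - (sect False C \<inter> Sn n))"
    by (simp add: Diff_Int)
  also have "\<dots> = measure lborel (sect False C) - measure lborel (sect False C \<inter> Sn n)"
    using sect_sub[of False C] sect_borel[OF C, of False]
    by (intro measure_Diff fin_lb[of _ 0 1] sets.Int sect_borel[OF C] Sn_borel) auto
  finally show ?thesis .
qed

lemma measure_PP:
  assumes C: "C \<in> sets MM"
  shows "measure PP C = (measure lborel (sect True C) + measure lborel (sect False C)) / 2"
proof -
  let ?B = "measure_pmf (bernoulli_pmf (1/2))"
  let ?X = "(\<lambda>(c,y). (c, y, c)) -` C \<inter> space (?B \<Otimes>\<^sub>M LL)"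
  have sfL: "sigma_finite_measure LL"
    using prob_LL by (simp add: prob_space_imp_sigma_finite)
  have X: "?X \<in> sets (?B \<Otimes>\<^sub>M LL)" by (rule measurable_sets[OF T_meas C])
  have "emeasure PP C = emeasure (?B \<Otimes>\<^sub>M LL) ?X"
    unfolding PP_def by (rule emeasure_distr[OF T_meas C])
  also have "\<dots> = (\<integral>\<^sup>+c. emeasure LL (Pair c -` ?X) \<partial>?B)"
    by (rule sigma_finite_measure.emeasure_pair_measure_alt[OF sfL X])
  also have "\<dots> = (\<integral>\<^sup>+c. emeasure lborel (sect c C) \<partial>?B)"
  proof (intro nn_integral_cong)
    fix c
    have "Pair c -` ?X = sect c C" by (auto simp: sect_def space_pair_measure)
    then show "emeasure LL (Pair c -` ?X) = emeasure lborel (sect c C)"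
      by (simp add: emeasure_restrict_space sect_sub)
  qed
  also have "\<dots> = emeasure lborel (sect True C) * ennreal (1/2) + emeasure lborel (sect False C) * ennreal (1 - 1/2)"
    by (rule nn_integral_bernoulli_pmf) auto
  also have "\<dots> = ennreal ((measure lborel (sect True C) + measure lborel (sect False C)) / 2)"
  proof -
    define a where "a = measure lborel (sect True C)"
    define b where "b = measure lborel (sect False C)"
    have ea: "emeasure lborel (sect True C) = ennreal a"
      unfolding a_def using fin_lb[OF sect_borel[OF C] sect_sub, of True] by (simp add: emeasure_eq_ennreal_measure)
    have eb: "emeasure lborel (sect False C) = ennreal b"
      unfolding b_def using fin_lb[OF sect_borel[OF C] sect_sub, of False] by (simp add: emeasure_eq_ennreal_measure)
    have "a \<ge> 0" "b \<ge> 0" unfolding a_def b_def by simp_all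
    then have "ennreal a * ennreal (1/2) + ennreal b * ennreal (1 - 1/2) = ennreal ((a + b) / 2)"
    proof -
      assume ab: "a \<ge> 0" "b \<ge> 0"
      have h: "(1 - 1/2::real) = 1/2" by simp
      have "ennreal ((a + b) / 2) = ennreal (a*(1/2) + b*(1/2))" by (simp add: field_simps)
      also have "\<dots> = ennreal (a*(1/2)) + ennreal (b*(1/2))" by (rule ennreal_plus) (use ab in auto)
      also have "\<dots> = ennreal a * ennreal (1/2) + ennreal b * ennreal (1/2)"
        using ab by (simp only: ennreal_mult)
      finally show ?thesis unfolding h by simp
    qed
    then show ?thesis unfolding ea eb a_def b_def .
  qed
  finally show ?thesis by (simp add: measure_def)
qed

lemma setwise_main: "setwise_conv MM PPn PP"
proof (rule setwise_from_sets[OF prob_PPn sets_PPn prob_PP sets_PP])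
  fix C assume C: "C \<in> sets MM"
  have t1: "(\<lambda>n. measure lborel (sect True C \<inter> Sn n)) \<longlonglongrightarrow> measure lborel (sect True C) / 2"
    using rademacher_sets[OF sect_borel[OF C, of True]] sect_sub[of True C] by (simp add: Int_absorb2)
  have t2: "(\<lambda>n. measure lborel (sect False C \<inter> Sn n)) \<longlonglongrightarrow> measure lborel (sect False C) / 2"
    using rademacher_sets[OF sect_borel[OF C, of False]] sect_sub[of False C] by (simp add: Int_absorb2)
  have "(\<lambda>n. measure lborel (sect True C \<inter> Sn n) + (measure lborel (sect False C) - measure lborel (sect False C \<inter> Sn n)))
      \<longlonglongrightarrow> measure lborel (sect True C) / 2 + (measure lborel (sect False C) - measure lborel (sect False C) / 2)"
    by (intro tendsto_intros t1 t2)
  then show "(\<lambda>n. measure (PPn n) C) \<longlonglongrightarrow> measure PP C"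
    unfolding measure_PPn[OF C] measure_PP[OF C] by (simp add: field_simps)
qed

lemma sfs_vimage:
  assumes Q: "prob_space Q" and T: "T \<in> Q \<rightarrow>\<^sub>M N"
  shows "sigma_finite_subalgebra Q (vimage_algebra (space Q) T N)"
proof (rule finite_measure_subalgebra_is_sigma_finite)
  interpret prob_space Q by fact
  have "subalgebra Q (vimage_algebra (space Q) T N)"
    unfolding subalgebra_def
    using measurable_space[OF T] measurable_sets[OF T]
    by (auto simp: sets_vimage_algebra2[of T "space Q" N] Pi_iff)
  then show "finite_measure_subalgebra Q (vimage_algebra (space Q) T N)"
    by (simp add: finite_measure_subalgebra_def finite_measure_subalgebra_axioms_def finite_measure_axioms)
qed

lemma meas_vimage_comp:
  assumes "T \<in> space Q \<rightarrow> space N" "g \<in> borel_measurable N"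
  shows "(\<lambda>x. g (T x)) \<in> borel_measurable (vimage_algebra (space Q) T N)"
  using measurable_compose[OF measurable_vimage_algebra1[OF assms(1)] assms(2)] by (simp add: comp_def)

lemma ce_det:
  assumes sf: "sigma_finite_subalgebra Q F" and Q: "prob_space Q"
    and ae: "AE x in Q. h x = h' x" and hm: "h \<in> borel_measurable Q" and hF: "h' \<in> borel_measurable F"
    and b: "\<And>x. \<bar>h' x\<bar> \<le> 1"
  shows "AE x in Q. real_cond_exp Q F h x = h' x"
proof -
  interpret sigma_finite_subalgebra Q F by fact
  interpret p: prob_space Q by fact
  have hQ: "h' \<in> borel_measurable Q" by (rule measurable_from_subalg[OF subalg hF])
  have "integrable Q h'"
    by (rule p.integrable_const_bound[where B=1]) (use b hQ in auto)
  then have "AE x in Q. real_cond_exp Q F h' x = h' x" using hF by (rule real_cond_exp_F_meas)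
  moreover have "AE x in Q. real_cond_exp Q F h x = real_cond_exp Q F h' x"
    by (rule real_cond_exp_cong[OF ae hm hQ])
  ultimately show ?thesis by auto
qed

abbreviation "pr1 \<equiv> (\<lambda>x::bool \<times> real \<times> bool. (fst (snd x), snd (snd x)))"
abbreviation "pr2 \<equiv> (\<lambda>x::bool \<times> real \<times> bool. fst (snd x))"

lemma pr_meas:
  assumes "sets Q = sets MM"
  shows "pr1 \<in> Q \<rightarrow>\<^sub>M (YY \<Otimes>\<^sub>M count_space UNIV)" "pr2 \<in> Q \<rightarrow>\<^sub>M YY"
  unfolding measurable_cong_sets[OF assms refl]
  by (rule measurable_Pair; rule measurable_compose[OF measurable_snd]; simp)
     (rule measurable_compose[OF measurable_snd measurable_fst])

lemma pr_space:
  assumes "sets Q = sets MM"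
  shows "pr1 \<in> space Q \<rightarrow> space (YY \<Otimes>\<^sub>M count_space UNIV)" "pr2 \<in> space Q \<rightarrow> space YY"
  using measurable_space[OF pr_meas(1)[OF assms]] measurable_space[OF pr_meas(2)[OF assms]] by auto

lemma ci_PPn: "cond_indep_given (PPn n) (count_space UNIV) YY (count_space UNIV)"
  unfolding cond_indep_given_def
proof (intro ballI)
  fix A :: "bool set"
  let ?h = "\<lambda>x::bool \<times> real \<times> bool. indicator A (fst x) :: real"
  let ?h' = "\<lambda>x::bool \<times> real \<times> bool. indicator A (gg n (fst (snd x))) :: real"
  have g1: "(\<lambda>p. indicator A (gg n (fst p)) :: real) \<in> borel_measurable (YY \<Otimes>\<^sub>M count_space UNIV)"
    by (rule measurable_compose[OF measurable_fst]) (rule measurable_compose[OF gg_measY], simp)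
  have g2: "(\<lambda>y. indicator A (gg n y) :: real) \<in> borel_measurable YY"
    by (rule measurable_compose[OF gg_measY], simp)
  have hMM: "?h \<in> borel_measurable MM" by (rule measurable_compose[OF measurable_fst]) simp
  have h'MM: "?h' \<in> borel_measurable MM" by (rule measurable_compose[OF pr_meas(2)[OF refl] g2])
  have hm: "?h \<in> borel_measurable (PPn n)" unfolding measurable_cong_sets[OF sets_PPn refl] by (rule hMM)
  have ae: "AE x in PPn n. ?h x = ?h' x"
  proof -
    have pm: "{x \<in> space MM. ?h x = ?h' x} \<in> sets MM" by (rule measurable_equality_set[OF hMM h'MM])
    show ?thesis unfolding PPn_def AE_distr_iff[OF Tn_meas pm] by simp
  qed
  have b: "\<bar>?h' x\<bar> \<le> 1" for x by (simp add: indicator_def)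
  have e1: "AE x in PPn n. real_cond_exp (PPn n) (vimage_algebra (space (PPn n)) pr1 (YY \<Otimes>\<^sub>M count_space UNIV)) ?h x = ?h' x"
    by (rule ce_det[OF sfs_vimage[OF prob_PPn pr_meas(1)[OF sets_PPn]] prob_PPn ae hm
          meas_vimage_comp[OF pr_space(1)[OF sets_PPn] g1, unfolded fst_conv] b])
  have e2: "AE x in PPn n. real_cond_exp (PPn n) (vimage_algebra (space (PPn n)) pr2 YY) ?h x = ?h' x"
    by (rule ce_det[OF sfs_vimage[OF prob_PPn pr_meas(2)[OF sets_PPn]] prob_PPn ae hm
          meas_vimage_comp[OF pr_space(2)[OF sets_PPn] g2] b])
  show "AE x in PPn n. real_cond_exp (PPn n) (vimage_algebra (space (PPn n)) pr1 (YY \<Otimes>\<^sub>M count_space UNIV)) ?h x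
      = real_cond_exp (PPn n) (vimage_algebra (space (PPn n)) pr2 YY) ?h x"
    using e1 e2 by eventually_elim simp
qed

lemma space_PP: "space PP = space MM" by (simp add: PP_def)

lemma nci_PP: "\<not> cond_indep_given PP (count_space UNIV) YY (count_space UNIV)"
proof
  assume "cond_indep_given PP (count_space UNIV) YY (count_space UNIV)"
  then have main: "AE x in PP. real_cond_exp PP (vimage_algebra (space PP) pr1 (YY \<Otimes>\<^sub>M count_space UNIV)) (\<lambda>x. indicator {True} (fst x)) x
      = real_cond_exp PP (vimage_algebra (space PP) pr2 YY) (\<lambda>x. indicator {True} (fst x)) x"
    unfolding cond_indep_given_def by auto
  let ?h = "\<lambda>x::bool \<times> real \<times> bool. indicator {True} (fst x) :: real"
  let ?h' = "\<lambda>x::bool \<times> real \<times> bool. indicator {True} (snd (snd x)) :: real"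
  let ?F1 = "vimage_algebra (space PP) pr1 (YY \<Otimes>\<^sub>M count_space UNIV)"
  let ?F2 = "vimage_algebra (space PP) pr2 YY"
  have g1: "(\<lambda>p. indicator {True} (snd p) :: real) \<in> borel_measurable (YY \<Otimes>\<^sub>M count_space UNIV)"
    by (rule measurable_compose[OF measurable_snd]) simp
  have hMM: "?h \<in> borel_measurable MM" by (rule measurable_compose[OF measurable_fst]) simp
  have h'MM: "?h' \<in> borel_measurable MM"
    by (rule measurable_compose[OF pr_meas(1)[OF refl] g1, unfolded snd_conv])
  have hm: "?h \<in> borel_measurable PP" unfolding measurable_cong_sets[OF sets_PP refl] by (rule hMM)
  have ae: "AE x in PP. ?h x = ?h' x"
  proof -
    have pm: "{x \<in> space MM. ?h x = ?h' x} \<in> sets MM" by (rule measurable_equality_set[OF hMM h'MM])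
    show ?thesis unfolding PP_def AE_distr_iff[OF T_meas pm] by (simp add: split_beta)
  qed
  have b: "\<bar>?h' x\<bar> \<le> 1" for x by (simp add: indicator_def)
  have e1: "AE x in PP. real_cond_exp PP ?F1 ?h x = ?h' x"
    by (rule ce_det[OF sfs_vimage[OF prob_PP pr_meas(1)[OF sets_PP]] prob_PP ae hm
          meas_vimage_comp[OF pr_space(1)[OF sets_PP] g1, unfolded snd_conv] b])
  have sf2: "sigma_finite_subalgebra PP ?F2" by (rule sfs_vimage[OF prob_PP pr_meas(2)[OF sets_PP]])
  interpret pp: prob_space PP by (rule prob_PP)
  have e2: "AE x in PP. real_cond_exp PP ?F2 ?h x = 1/2"
  proof (rule sigma_finite_subalgebra.real_cond_exp_charact[OF sf2, where g="\<lambda>_. 1/2"])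
    fix B assume B: "B \<in> sets ?F2"
    then obtain C where C: "C \<in> sets YY" and BC: "B = pr2 -` C \<inter> space PP"
      using sets_vimage_algebra2[OF pr_space(2)[OF sets_PP]] by auto
    have BM: "B \<in> sets MM" using measurable_sets[OF pr_meas(2)[OF sets_PP] C] BC sets_PP by simp
    define D where "D = B \<inter> {x \<in> space MM. fst x}"
    have FM: "{x \<in> space MM. fst x} \<in> sets MM"
    proof -
      have "fst -` {True} \<inter> space MM \<in> sets MM" by (rule measurable_sets[OF measurable_fst]) simp
      moreover have "fst -` {True} \<inter> space MM = {x \<in> space MM. fst x}" by auto
      ultimately show ?thesis by simp
    qed
    have DM: "D \<in> sets MM" unfolding D_def using BM FM by (rule sets.Int)
    have Csub: "C \<subseteq> {0..1}" using C sets.sets_into_space[OF C] by simp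
    have sB: "sect b B = C" for b using Csub unfolding BC sect_def space_PP by (auto simp: space_pair_measure)
    have sD1: "sect True D = C" using Csub unfolding D_def BC sect_def space_PP by (auto simp: space_pair_measure)
    have sD2: "sect False D = {}" unfolding D_def sect_def by auto
    have Dsp: "D \<subseteq> space PP" unfolding D_def space_PP by auto
    have Bsp: "B \<subseteq> space PP" unfolding BC by auto
    have "(\<integral>x\<in>B. ?h x \<partial>PP) = integral\<^sup>L PP (indicator D)"
      unfolding set_lebesgue_integral_def
      by (intro Bochner_Integration.integral_cong refl) (auto simp: D_def indicator_def space_PP)
    also have "\<dots> = measure PP D" using Dsp by (simp add: Int_absorb2)
    also have "\<dots> = measure lborel C / 2" using measure_PP[OF DM] sD1 sD2 by simp
    finally have l: "(\<integral>x\<in>B. ?h x \<partial>PP) = measure lborel C / 2" .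
    have "(\<integral>x\<in>B. (1/2::real) \<partial>PP) = measure PP B / 2"
      unfolding set_lebesgue_integral_def using Bsp by (simp add: Int_absorb2)
    also have "\<dots> = measure lborel C / 2" using measure_PP[OF BM] sB by simp
    finally show "(\<integral>x\<in>B. ?h x \<partial>PP) = (\<integral>x\<in>B. (1/2::real) \<partial>PP)" using l by simp
  qed (auto intro: pp.integrable_const_bound[where B=1] hm)
  have "AE x in PP. ?h' x = 1/2" using main e1 e2 by eventually_elim simp
  then have "AE x in PP. False" by eventually_elim (simp add: indicator_def of_bool_def split: if_splits)
  then show False using pp.AE_False by simp
qed

theorem mainTheorem4:
  "\<exists>(Pn :: nat \<Rightarrow> (bool \<times> real \<times> bool) measure) (P :: (bool \<times> real \<times> bool) measure).
     (\<forall>n. prob_space (Pn n) \<and>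
          sets (Pn n) = sets (count_space UNIV \<Otimes>\<^sub>M (restrict_space borel {0..1::real} \<Otimes>\<^sub>M count_space UNIV)) \<and>
          cond_indep_given (Pn n) (count_space UNIV) (restrict_space borel {0..1}) (count_space UNIV)) \<and>
     prob_space P \<and>
     sets P = sets (count_space UNIV \<Otimes>\<^sub>M (restrict_space borel {0..1::real} \<Otimes>\<^sub>M count_space UNIV)) \<and>
     setwise_conv (count_space UNIV \<Otimes>\<^sub>M (restrict_space borel {0..1::real} \<Otimes>\<^sub>M count_space UNIV)) Pn P \<and>
     \<not> cond_indep_given P (count_space UNIV) (restrict_space borel {0..1}) (count_space UNIV)"
  apply (rule exI[of _ PPn], rule exI[of _ PP])
  using prob_PPn sets_PPn ci_PPn prob_PP sets_PP setwise_main nci_PP by blast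

end
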